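(* Let $\{G_i\}$ be a family of connected graphs with common induced subgraph $J$, embedded as $J_i\subseteq G_i$, such that $\{(G_i|J_i)\}$ is isometric, and let $H=\amalg\{(G_i|J_i)\}$. If, for each $i$, $A_i\subseteq V(G_i)$ is a local metric set for $G_i$, then $\bigcup_i A_i$ (viewed as a subset of $V(H)$) is a local metric set for $H$.
   Context: $d_G$ is shortest-path distance in $G$. A vertex $w$ distinguishes an edge $uv$ of $G$ if $d_G(w,u)\neq d_G(w,v)$; a local metric set of $G$ is a set $B\subseteq V(G)$ such that every edge of $G$ is distinguished by some vertex of $B$. $J$ is a common induced subgraph of each $G_i$ via injective maps $\iota_i:V(J)\to V(G_i)$ with $\iota_i(x)\iota_i(y)\in E(G_i)$ iff $xy\in E(J)$; $J_i$ is the induced image, $x^i=\iota_i(x)$. $H=\amalg\{(G_i|J_i)\}$ is obtained from the disjoint union of the $G_i$ by identifying, for each $x\in V(J)$, all $x^i$ into one vertex; each $G_i$ is regarded as a subgraph of $H$. The family is isometric if $d_{G_i}(a^i,b^i)=d_{G_j}(a^j,b^j)$ for all $i,j$ and $a,b\in V(J)$. *)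

theory Defs
  imports Main "HOL-Library.Extended_Nat"
begin

definition graph :: "'a set \<Rightarrow> 'a set set \<Rightarrow> bool" where
  "graph V E \<longleftrightarrow> (\<forall>e\<in>E. \<exists>u v. e = {u, v} \<and> u \<noteq> v \<and> u \<in> V \<and> v \<in> V)"

definition walk :: "'a set \<Rightarrow> 'a set set \<Rightarrow> 'a list \<Rightarrow> bool" where
  "walk V E xs \<longleftrightarrow> xs \<noteq> [] \<and> set xs \<subseteq> V \<and>
     (\<forall>k. Suc k < length xs \<longrightarrow> {xs ! k, xs ! Suc k} \<in> E)"

text \<open>Shortest-path distance (infinity if no walk exists).\<close>
definition dist :: "'a set \<Rightarrow> 'a set set \<Rightarrow> 'a \<Rightarrow> 'a \<Rightarrow> enat" where
  "dist V E u v = Inf {enat (length xs - 1) | xs. walk V E xs \<and> hd xs = u \<and> last xs = v}"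

definition connected_graph :: "'a set \<Rightarrow> 'a set set \<Rightarrow> bool" where
  "connected_graph V E \<longleftrightarrow> graph V E \<and> (\<forall>u\<in>V. \<forall>v\<in>V. dist V E u v \<noteq> \<infinity>)"

definition distinguishes :: "'a set \<Rightarrow> 'a set set \<Rightarrow> 'a \<Rightarrow> 'a \<Rightarrow> 'a \<Rightarrow> bool" where
  "distinguishes V E w u v \<longleftrightarrow> dist V E w u \<noteq> dist V E w v"

definition local_metric_set :: "'a set \<Rightarrow> 'a set set \<Rightarrow> 'a set \<Rightarrow> bool" where
  "local_metric_set V E B \<longleftrightarrow> B \<subseteq> V \<and>
     (\<forall>u v. {u, v} \<in> E \<longrightarrow> (\<exists>w\<in>B. distinguishes V E w u v))"

definition induced_embedding ::
  "'j set \<Rightarrow> 'j set set \<Rightarrow> 'v set \<Rightarrow> 'v set set \<Rightarrow> ('j \<Rightarrow> 'v) \<Rightarrow> bool" where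
  "induced_embedding VJ EJ V E iota \<longleftrightarrow> inj_on iota VJ \<and> iota ` VJ \<subseteq> V \<and>
     (\<forall>x\<in>VJ. \<forall>y\<in>VJ. {iota x, iota y} \<in> E \<longleftrightarrow> {x, y} \<in> EJ)"

text \<open>Amalgamation H: the disjoint union of the G_i with all copies iota i x of a
  vertex x of J identified to the single vertex Inl x; every other vertex v of G_i
  becomes Inr (i, v).  amal_emb i is the embedding of G_i into H.\<close>
definition amal_emb :: "'j set \<Rightarrow> ('i \<Rightarrow> 'j \<Rightarrow> 'v) \<Rightarrow> 'i \<Rightarrow> 'v \<Rightarrow> 'j + ('i \<times> 'v)" where
  "amal_emb VJ iota i v =
     (if v \<in> iota i ` VJ then Inl (the_inv_into VJ (iota i) v) else Inr (i, v))"

definition amal_V :: "'i set \<Rightarrow> ('i \<Rightarrow> 'v set) \<Rightarrow> 'j set \<Rightarrow> ('i \<Rightarrow> 'j \<Rightarrow> 'v)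
    \<Rightarrow> ('j + ('i \<times> 'v)) set" where
  "amal_V I VG VJ iota = (\<Union>i\<in>I. amal_emb VJ iota i ` VG i)"

definition amal_E :: "'i set \<Rightarrow> ('i \<Rightarrow> 'v set set) \<Rightarrow> 'j set \<Rightarrow> ('i \<Rightarrow> 'j \<Rightarrow> 'v)
    \<Rightarrow> ('j + ('i \<times> 'v)) set set" where
  "amal_E I EG VJ iota = (\<Union>i\<in>I. (\<lambda>e. amal_emb VJ iota i ` e) ` EG i)"

end

theory Submission
  imports Defs
begin

lemma dist_le_iff:
  "dist V E u v \<le> enat n \<longleftrightarrow> (\<exists>ys. walk V E ys \<and> hd ys = u \<and> last ys = v \<and> length ys \<le> Suc n)"
proof
  let ?S = "{enat (length xs - 1) | xs. walk V E xs \<and> hd xs = u \<and> last xs = v}"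
  assume a: "dist V E u v \<le> enat n"
  have ne: "?S \<noteq> {}"
  proof
    assume "?S = {}" then have "dist V E u v = \<infinity>" unfolding dist_def by (simp add: Inf_enat_def)
    with a show False by simp
  qed
  then obtain z where "z \<in> ?S" by blast
  then have "(LEAST x. x \<in> ?S) \<in> ?S" by (rule LeastI[of "\<lambda>x. x \<in> ?S"])
  moreover have "Inf ?S = (LEAST x. x \<in> ?S)" unfolding Inf_enat_def by (rule if_not_P[OF ne])
  ultimately have "Inf ?S \<in> ?S" by simp
  then obtain xs where xs: "walk V E xs" "hd xs = u" "last xs = v" "Inf ?S = enat (length xs - 1)" by blast
  with a have "length xs - 1 \<le> n" unfolding dist_def by simp
  with xs show "\<exists>ys. walk V E ys \<and> hd ys = u \<and> last ys = v \<and> length ys \<le> Suc n" by (intro exI[of _ xs]) auto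
next
  assume "\<exists>ys. walk V E ys \<and> hd ys = u \<and> last ys = v \<and> length ys \<le> Suc n"
  then obtain ys where ys: "walk V E ys" "hd ys = u" "last ys = v" "length ys \<le> Suc n" by blast
  then have "dist V E u v \<le> enat (length ys - 1)" unfolding dist_def by (auto intro: Inf_lower)
  also have "\<dots> \<le> enat n" using ys(4) by simp
  finally show "dist V E u v \<le> enat n" .
qed

lemma enat_eqI: assumes h: "\<And>n. (a::enat) \<le> enat n \<longleftrightarrow> b \<le> enat n" shows "a = b"
proof (rule antisym)
  show "a \<le> b" proof (cases b) case (enat m) then show ?thesis using h[of m] by simp qed simp
  show "b \<le> a" proof (cases a) case (enat m) then show ?thesis using h[of m] by simp qed simp
qed

lemma walk_hd: "walk V E (y # bs) \<Longrightarrow> y \<in> V" by (simp add: walk_def)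

lemma walk_single: "walk V E [x] \<longleftrightarrow> x \<in> V"
  by (auto simp: walk_def)

lemma walk_Cons2: "walk V E (x # y # zs) \<longleftrightarrow> x \<in> V \<and> {x, y} \<in> E \<and> walk V E (y # zs)"
proof
  assume w: "walk V E (x # y # zs)"
  have "{x,y} \<in> E" using w unfolding walk_def by (metis nth_Cons_0 nth_Cons_Suc length_Cons zero_less_Suc Suc_less_eq) 
  moreover have "walk V E (y # zs)" unfolding walk_def
  proof (intro conjI allI impI)
    fix k assume "Suc k < length (y # zs)"
    then have "Suc (Suc k) < length (x # y # zs)" by simp
    then have "{(x # y # zs) ! Suc k, (x # y # zs) ! Suc (Suc k)} \<in> E" using w unfolding walk_def by blast
    then show "{(y # zs) ! k, (y # zs) ! Suc k} \<in> E" by simp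
  qed (use w in \<open>auto simp: walk_def\<close>)
  ultimately show "x \<in> V \<and> {x, y} \<in> E \<and> walk V E (y # zs)" using w by (auto simp: walk_def)
next
  assume a: "x \<in> V \<and> {x, y} \<in> E \<and> walk V E (y # zs)"
  show "walk V E (x # y # zs)" unfolding walk_def
  proof (intro conjI allI impI)
    fix k assume k: "Suc k < length (x # y # zs)"
    show "{(x # y # zs) ! k, (x # y # zs) ! Suc k} \<in> E"
    proof (cases k)
      case 0 then show ?thesis using a by simp
    next
      case (Suc m) then show ?thesis using a k unfolding walk_def by auto
    qed
  qed (use a in \<open>auto simp: walk_def\<close>)
qed

lemma walk_append_iff:
  "as \<noteq> [] \<Longrightarrow> walk V E (as @ y # bs) \<longleftrightarrow> walk V E (as @ [y]) \<and> walk V E (y # bs)"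
proof (induction as rule: list_nonempty_induct)
  case (single x) then show ?case by (auto simp: walk_Cons2 walk_single dest: walk_hd)
next
  case (cons x xs)
  then obtain z zs where "xs = z # zs" by (cases xs) auto
  then show ?case using cons by (auto simp: walk_Cons2 dest: walk_hd)
qed


locale amal =
  fixes I :: "'i set" and VG :: "'i \<Rightarrow> 'v set" and EG :: "'i \<Rightarrow> 'v set set"
    and VJ :: "'j set" and EJ :: "'j set set" and iota :: "'i \<Rightarrow> 'j \<Rightarrow> 'v"
  assumes gr: "\<And>i. i \<in> I \<Longrightarrow> graph (VG i) (EG i)"
    and emb: "\<And>i. i \<in> I \<Longrightarrow> induced_embedding VJ EJ (VG i) (EG i) (iota i)"
    and iso: "\<And>i j a b. \<lbrakk>i \<in> I; j \<in> I; a \<in> VJ; b \<in> VJ\<rbrakk> \<Longrightarrow>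
               dist (VG i) (EG i) (iota i a) (iota i b) = dist (VG j) (EG j) (iota j a) (iota j b)"
begin

abbreviation "em \<equiv> amal_emb VJ iota"
abbreviation "HV \<equiv> amal_V I VG VJ iota"
abbreviation "HE \<equiv> amal_E I EG VJ iota"

lemma inj: "i \<in> I \<Longrightarrow> inj_on (iota i) VJ" using emb by (simp add: induced_embedding_def)
lemma img: "i \<in> I \<Longrightarrow> a \<in> VJ \<Longrightarrow> iota i a \<in> VG i" using emb by (auto simp: induced_embedding_def)
lemma ind: "i \<in> I \<Longrightarrow> a \<in> VJ \<Longrightarrow> b \<in> VJ \<Longrightarrow> {iota i a, iota i b} \<in> EG i \<longleftrightarrow> {a, b} \<in> EJ"
  using emb by (auto simp: induced_embedding_def)

lemma em_Inl: "i \<in> I \<Longrightarrow> em i v = Inl x \<longleftrightarrow> x \<in> VJ \<and> v = iota i x"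
  using inj[of i] by (auto simp: amal_emb_def the_inv_into_f_f the_inv_into_into)

lemma em_Inr: "em i v = Inr (k, w) \<longleftrightarrow> k = i \<and> w = v \<and> v \<notin> iota i ` VJ"
  by (auto simp: amal_emb_def)

lemma em_inj: assumes "i \<in> I" shows "inj (em i)"
proof (rule injI)
  fix x y assume e: "em i x = em i y"
  show "x = y"
  proof (cases "em i x")
    case (Inl a) then show ?thesis using e em_Inl[OF assms] by metis
  next
    case (Inr p) then show ?thesis using e em_Inr by (metis prod.exhaust)
  qed
qed

lemma em_eq: assumes "i \<in> I" "j \<in> I" "i \<noteq> j" "em i p = em j p'"
  shows "\<exists>a\<in>VJ. p = iota i a \<and> p' = iota j a"
proof (cases "em i p")
  case (Inl a) then show ?thesis using assms em_Inl by metis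
next
  case (Inr r) then obtain k w where "em i p = Inr (k, w)" by (cases r) auto
  then show ?thesis using assms em_Inr by metis
qed

lemma edge_pull: assumes i: "i \<in> I" and e: "{em i p, em i q} \<in> HE"
  shows "{p, q} \<in> EG i"
proof -
  obtain k c d where k: "k \<in> I" "{c,d} \<in> EG k" "c \<noteq> d" "c \<in> VG k" "d \<in> VG k"
    and eq: "{em i p, em i q} = {em k c, em k d}"
    using e gr unfolding amal_E_def graph_def by fastforce
  show ?thesis
  proof (cases "k = i")
    case True
    then have "em i ` {p,q} = em i ` {c,d}" using eq by simp
    then have "{p,q} = {c,d}" using em_inj[OF i] by (metis inj_image_eq_iff)
    then show ?thesis using k True by simp
  next
    case False
    have ne: "em k c \<noteq> em k d" using em_inj[OF k(1)] k(3) by (auto dest: injD)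
    have gen: "{p,q} \<in> EG i" if h1: "em i p = em k c" and h2: "em i q = em k d" and h: "{c,d} \<in> EG k"
      for c d p q
    proof -
      have ik: "i \<noteq> k" using False by auto
      obtain a where a: "a \<in> VJ" "p = iota i a" "c = iota k a" using em_eq[OF i k(1) ik h1] by blast
      obtain b where b: "b \<in> VJ" "q = iota i b" "d = iota k b" using em_eq[OF i k(1) ik h2] by blast
      have "{a,b} \<in> EJ" using ind[OF k(1) a(1) b(1)] h a b by simp
      then show ?thesis using ind[OF i a(1) b(1)] a b by simp
    qed
    from eq ne have "(em i p = em k c \<and> em i q = em k d) \<or> (em i p = em k d \<and> em i q = em k c)"
      by (auto simp: doubleton_eq_iff)
    then show ?thesis
    proof
      assume "em i p = em k c \<and> em i q = em k d" then show ?thesis using gen k(2) by blast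
    next
      assume h: "em i p = em k d \<and> em i q = em k c"
      have "{d,c} \<in> EG k" using k(2) by (simp add: insert_commute)
      then show ?thesis using gen h by blast
    qed
  qed
qed

lemma Inr_adj: assumes "{Inr (j, v), w} \<in> HE"
  shows "j \<in> I \<and> w \<in> em j ` VG j \<and> Inr (j, v) \<in> em j ` VG j"
proof -
  obtain k c d where k: "k \<in> I" "{c,d} \<in> EG k" "c \<in> VG k" "d \<in> VG k"
    and eq: "{Inr (j, v), w} = {em k c, em k d}"
    using assms gr unfolding amal_E_def graph_def by fastforce
  have "Inr (j, v) = em k c \<or> Inr (j, v) = em k d" using eq by (auto simp: doubleton_eq_iff)
  then have "k = j" using em_Inr by metis
  then show ?thesis using k eq by (auto simp: doubleton_eq_iff)
qed


lemma pull_walk: assumes j: "j \<in> I" and ne: "ys \<noteq> []" and s: "set ys \<subseteq> VG j"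
  and w: "walk HV HE (map (em j) ys)"
  shows "walk (VG j) (EG j) ys"
  unfolding walk_def
proof (intro conjI allI impI ne s)
  fix k assume k: "Suc k < length ys"
  then have "{map (em j) ys ! k, map (em j) ys ! Suc k} \<in> HE" using w unfolding walk_def by simp
  then have "{em j (ys ! k), em j (ys ! Suc k)} \<in> HE" using k by simp
  then show "{ys ! k, ys ! Suc k} \<in> EG j" using edge_pull[OF j] by blast
qed

lemma push_walk: assumes i: "i \<in> I" and w: "walk (VG i) (EG i) ys"
  shows "walk HV HE (map (em i) ys)"
  unfolding walk_def
proof (intro conjI allI impI)
  show "map (em i) ys \<noteq> []" using w by (simp add: walk_def)
  show "set (map (em i) ys) \<subseteq> HV" using w i by (auto simp: walk_def amal_V_def)
  fix k assume k: "Suc k < length (map (em i) ys)"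
  then have "{ys ! k, ys ! Suc k} \<in> EG i" using w by (simp add: walk_def)
  then have "em i ` {ys ! k, ys ! Suc k} \<in> HE" using i unfolding amal_E_def by blast
  then show "{map (em i) ys ! k, map (em i) ys ! Suc k} \<in> HE" using k by simp
qed

lemma chain: "walk HV HE (x # zs) \<Longrightarrow> x = Inr (j, v) \<Longrightarrow>
   (\<forall>z\<in>set (butlast zs). \<exists>r. z = Inr r) \<Longrightarrow> set zs \<subseteq> em j ` VG j"
proof (induction zs arbitrary: x v)
  case Nil then show ?case by simp
next
  case (Cons y zs)
  have "{Inr (j, v), y} \<in> HE" using Cons.prems walk_Cons2 by metis
  then have y: "y \<in> em j ` VG j" using Inr_adj by blast
  show ?case
  proof (cases "zs = []")
    case True then show ?thesis using y by simp
  next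
    case False
    then have "y \<in> set (butlast (y # zs))" by simp
    then obtain r where r: "y = Inr r" using Cons.prems(3) by blast
    obtain j' w where r': "r = (j', w)" by (cases r)
    obtain c where "y = em j c" using y by blast
    then have "j' = j" using r r' em_Inr by metis
    then have "set zs \<subseteq> em j ` VG j"
      using Cons.IH[of y w] Cons.prems r r' False by (simp add: walk_Cons2)
    then show ?thesis using y by simp
  qed
qed

lemma Inl_V: assumes "Inl a \<in> HV" shows "a \<in> VJ"
proof -
  obtain k c where "k \<in> I" "Inl a = em k c" using assms unfolding amal_V_def by blast
  then show ?thesis using em_Inl by metis
qed


lemma walk_set: "walk V E xs \<Longrightarrow> set xs \<subseteq> V" by (simp add: walk_def)
lemma walk_ne: "walk V E xs \<Longrightarrow> xs \<noteq> []" by (simp add: walk_def)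

lemma main:
  "\<lbrakk>i \<in> I; walk HV HE xs; hd xs = em i p; last xs = em i q; p \<in> VG i; q \<in> VG i\<rbrakk>
   \<Longrightarrow> \<exists>ys. walk (VG i) (EG i) ys \<and> hd ys = p \<and> last ys = q \<and> length ys \<le> length xs"
proof (induction "length xs" arbitrary: xs p q rule: less_induct)
  case less
  note i = less.prems(1)
  show ?case
  proof (cases "\<exists>as a bs. xs = as @ Inl a # bs \<and> as \<noteq> [] \<and> bs \<noteq> []")
    case True
    then obtain as a bs where xs: "xs = as @ Inl a # bs" and ne: "as \<noteq> []" "bs \<noteq> []" by blast
    have w0: "walk HV HE (as @ Inl a # bs)" using less.prems(2) xs by simp
    have w1: "walk HV HE (as @ [Inl a])" and w2: "walk HV HE (Inl a # bs)"
      using iffD1[OF walk_append_iff[OF ne(1)] w0] by blast+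
    have "Inl a \<in> HV" using walk_set[OF w2] by simp
    then have a: "a \<in> VJ" by (rule Inl_V)
    have ia: "iota i a \<in> VG i" using img[OF i a] .
    have ema: "em i (iota i a) = Inl a" using em_Inl[OF i] a by simp
    obtain ys1 where y1: "walk (VG i) (EG i) ys1" "hd ys1 = p" "last ys1 = iota i a"
        "length ys1 \<le> length (as @ [Inl a])"
    proof -
      have "length (as @ [Inl a]) < length xs" using xs ne by simp
      moreover have "hd (as @ [Inl a]) = em i p" using ne xs less.prems(3) by simp
      moreover have "last (as @ [Inl a]) = em i (iota i a)" using ema by simp
      ultimately show ?thesis using less.hyps[of "as @ [Inl a]" p "iota i a", OF _ i w1 _ _ less.prems(5) ia] that
        by blast
    qed
    obtain ys2 where y2: "walk (VG i) (EG i) ys2" "hd ys2 = iota i a" "last ys2 = q"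
        "length ys2 \<le> length (Inl a # bs)"
    proof -
      have "length (Inl a # bs) < length xs" using xs ne by simp
      moreover have "last (Inl a # bs) = em i q" using ne xs less.prems(4) by simp
      moreover have "hd (Inl a # bs) = em i (iota i a)" using ema by simp
      ultimately show ?thesis using less.hyps[of "Inl a # bs" "iota i a" q, OF _ i w2 _ _ ia less.prems(6)] that
        by blast
    qed
    obtain ys2' where ys2: "ys2 = iota i a # ys2'" using y2(1,2) walk_ne by (cases ys2) auto
    have ys1: "ys1 = butlast ys1 @ [iota i a]" using y1(1,3) walk_ne by (metis append_butlast_last_id)
    show ?thesis
    proof (cases "butlast ys1 = []")
      case True
      then have "p = iota i a" using y1 ys1 by (metis append_Nil list.sel(1))
      then show ?thesis using y2 xs by (intro exI[of _ ys2]) auto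
    next
      case False
      let ?ys = "butlast ys1 @ iota i a # ys2'"
      have "walk (VG i) (EG i) ?ys" using walk_append_iff[OF False] y1 y2 ys1 ys2 by metis
      moreover have "hd ?ys = p" using False y1(2) ys1 by (metis hd_append)
      moreover have "last ?ys = q" using y2(3) ys2 by simp
      moreover have "length ?ys \<le> length xs"
      proof -
        have "length ys1 = length (butlast ys1) + 1" using ys1 by (metis length_append_singleton Suc_eq_plus1)
        then show ?thesis using y1(4) y2(4) ys2 xs by simp
      qed
      ultimately show ?thesis by blast
    qed
  next
    case False
    note nosplit = False
    obtain x xs' where xs: "xs = x # xs'" using walk_ne[OF less.prems(2)] by (cases xs) auto
    show ?thesis
    proof (cases xs')
      case Nil
      then have "em i p = em i q" using less.prems xs by simp
      then have "p = q" using em_inj[OF i] by (simp add: inj_eq)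
      then show ?thesis using less.prems xs Nil by (intro exI[of _ "[p]"]) (auto simp: walk_single)
    next
      case (Cons y zs)
      note xs' = Cons
      show ?thesis
      proof (cases zs)
        case Nil
        then have "{em i p, em i q} \<in> HE" using less.prems xs xs' by (simp add: walk_Cons2)
        then have "{p, q} \<in> EG i" using edge_pull[OF i] by blast
        then show ?thesis using less.prems xs xs' Nil
          by (intro exI[of _ "[p, q]"]) (auto simp: walk_Cons2 walk_single)
      next
        case (Cons z zs')
        have wxs: "walk HV HE (x # y # z # zs')" using less.prems xs xs' Cons by simp
        obtain r where yr: "y = Inr r"
        proof (cases y)
          case (Inl a)
          then have "xs = [x] @ Inl a # (z # zs')" using xs xs' Cons by simp
          then show ?thesis using nosplit by blast
        qed
        obtain j v where yjv: "y = Inr (j, v)" using yr by (cases r) auto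
        have "{y, x} \<in> HE" using wxs by (simp add: walk_Cons2 insert_commute)
        then have jx: "j \<in> I" "x \<in> em j ` VG j" "y \<in> em j ` VG j" using Inr_adj yjv by blast+
        have interior: "\<forall>w\<in>set (butlast (z # zs')). \<exists>r. w = Inr r"
        proof
          fix w assume "w \<in> set (butlast (z # zs'))"
          then obtain us ws where "butlast (z # zs') = us @ w # ws" by (metis split_list)
          then have "z # zs' = us @ w # ws @ [last (z # zs')]" by (metis append_butlast_last_id list.distinct(1) append.assoc append_Cons)
          then have e: "xs = (x # y # us) @ w # (ws @ [last (z # zs')])" using xs xs' Cons by simp
          show "\<exists>r. w = Inr r"
          proof (cases w)
            case (Inl a) then show ?thesis using e nosplit by blast
          qed simp
        qed
        have "set (z # zs') \<subseteq> em j ` VG j"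
          using chain[of y "z # zs'" j v] wxs yjv interior by (simp add: walk_Cons2)
        then have sxs: "set xs \<subseteq> em j ` VG j" using jx xs xs' Cons by auto
        define ys where "ys = map (inv_into (VG j) (em j)) xs"
        have mys: "map (em j) ys = xs" unfolding ys_def map_map
        proof (rule map_idI)
          fix x assume "x \<in> set xs"
          then have "x \<in> em j ` VG j" using sxs by blast
          then show "(em j \<circ> inv_into (VG j) (em j)) x = x" by (simp add: f_inv_into_f)
        qed
        have sys: "set ys \<subseteq> VG j" unfolding ys_def using sxs by (auto intro: inv_into_into)
        have ysne: "ys \<noteq> []" unfolding ys_def xs by simp
        have wys: "walk (VG j) (EG j) ys" using pull_walk[OF jx(1) ysne sys] mys less.prems(2) by simp
        have hys: "em j (hd ys) = em i p" using mys less.prems(3) ysne by (metis hd_map)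
        have lys: "em j (last ys) = em i q" using mys less.prems(4) ysne by (metis last_map)
        have lenys: "length ys = length xs" using mys by (metis length_map)
        show ?thesis
        proof (cases "j = i")
          case True
          then have "hd ys = p" "last ys = q" using hys lys em_inj[OF i] by (auto simp: inj_eq)
          then show ?thesis using wys True lenys by auto
        next
          case False
          obtain a where a: "a \<in> VJ" "p = iota i a" "hd ys = iota j a"
            using em_eq[OF i jx(1)] False hys by metis
          obtain b where b: "b \<in> VJ" "q = iota i b" "last ys = iota j b"
            using em_eq[OF i jx(1)] False lys by metis
          have "dist (VG j) (EG j) (iota j a) (iota j b) \<le> enat (length xs - 1)"
            using dist_le_iff wys a b lenys by fastforce
          then have "dist (VG i) (EG i) (iota i a) (iota i b) \<le> enat (length xs - 1)"
            using iso[OF i jx(1) a(1) b(1)] by simp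
          then obtain zs where "walk (VG i) (EG i) zs" "hd zs = p" "last zs = q"
              "length zs \<le> Suc (length xs - 1)"
            using dist_le_iff a b by metis
          then show ?thesis using xs by (intro exI[of _ zs]) auto
        qed
      qed
    qed
  qed
qed

lemma dist_eq: assumes i: "i \<in> I" and p: "p \<in> VG i" and q: "q \<in> VG i"
  shows "dist HV HE (em i p) (em i q) = dist (VG i) (EG i) p q"
proof (rule enat_eqI)
  fix n
  show "dist HV HE (em i p) (em i q) \<le> enat n \<longleftrightarrow> dist (VG i) (EG i) p q \<le> enat n"
  proof
    assume "dist HV HE (em i p) (em i q) \<le> enat n"
    then obtain xs where "walk HV HE xs" "hd xs = em i p" "last xs = em i q" "length xs \<le> Suc n"
      using dist_le_iff by metis
    then obtain ys where "walk (VG i) (EG i) ys" "hd ys = p" "last ys = q" "length ys \<le> Suc n"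
      using main[OF i _ _ _ p q] by (meson le_trans)
    then show "dist (VG i) (EG i) p q \<le> enat n" using dist_le_iff by metis
  next
    assume "dist (VG i) (EG i) p q \<le> enat n"
    then obtain ys where ys: "walk (VG i) (EG i) ys" "hd ys = p" "last ys = q" "length ys \<le> Suc n"
      using dist_le_iff by metis
    have ne: "ys \<noteq> []" using ys(1) walk_ne by blast
    have "walk HV HE (map (em i) ys)" using push_walk[OF i ys(1)] .
    moreover have "hd (map (em i) ys) = em i p" "last (map (em i) ys) = em i q"
      using ys ne by (simp_all add: hd_map last_map)
    ultimately show "dist HV HE (em i p) (em i q) \<le> enat n" using dist_le_iff ys(4)
      by (metis length_map)
  qed
qed

end

theorem lemma4:
  fixes I :: "'i set"
    and VG :: "'i \<Rightarrow> 'v set" and EG :: "'i \<Rightarrow> 'v set set"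
    and VJ :: "'j set" and EJ :: "'j set set"
    and iota :: "'i \<Rightarrow> 'j \<Rightarrow> 'v"
    and A :: "'i \<Rightarrow> 'v set"
  assumes conn: "\<And>i. i \<in> I \<Longrightarrow> finite (VG i) \<and> connected_graph (VG i) (EG i)"
    and J: "finite VJ" "graph VJ EJ"
    and emb: "\<And>i. i \<in> I \<Longrightarrow> induced_embedding VJ EJ (VG i) (EG i) (iota i)"
    and iso: "\<And>i j a b. \<lbrakk>i \<in> I; j \<in> I; a \<in> VJ; b \<in> VJ\<rbrakk> \<Longrightarrow>
               dist (VG i) (EG i) (iota i a) (iota i b) = dist (VG j) (EG j) (iota j a) (iota j b)"
    and lms: "\<And>i. i \<in> I \<Longrightarrow> local_metric_set (VG i) (EG i) (A i)"
  shows "local_metric_set (amal_V I VG VJ iota) (amal_E I EG VJ iota)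
           (\<Union>i\<in>I. amal_emb VJ iota i ` A i)"
proof -
  have gr0: "\<And>i. i \<in> I \<Longrightarrow> graph (VG i) (EG i)" using conn unfolding connected_graph_def by blast
  interpret amal I VG EG VJ EJ iota by (rule amal.intro[OF gr0 emb iso])
  have sub: "(\<Union>i\<in>I. em i ` A i) \<subseteq> HV"
    using lms unfolding amal_V_def local_metric_set_def by blast
  have "\<exists>w\<in>(\<Union>i\<in>I. em i ` A i). distinguishes HV HE w u v" if uv: "{u, v} \<in> HE" for u v
  proof -
    obtain i e where i: "i \<in> I" "e \<in> EG i" and eq: "{u, v} = em i ` e"
      using uv unfolding amal_E_def by blast
    obtain p q where pq: "e = {p, q}" "p \<in> VG i" "q \<in> VG i"
      using gr[OF i(1)] i(2) unfolding graph_def by blast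
    obtain w where w: "w \<in> A i" "distinguishes (VG i) (EG i) w p q"
      using lms[OF i(1)] i(2) pq(1) unfolding local_metric_set_def by blast
    have wV: "w \<in> VG i" using lms[OF i(1)] w(1) unfolding local_metric_set_def by blast
    have d: "distinguishes HV HE (em i w) (em i p) (em i q)"
      using w(2) dist_eq[OF i(1) wV pq(2)] dist_eq[OF i(1) wV pq(3)]
      unfolding distinguishes_def by simp
    have "{u, v} = {em i p, em i q}" using eq pq(1) by simp
    then have "distinguishes HV HE (em i w) u v"
      using d unfolding distinguishes_def by (auto simp: doubleton_eq_iff)
    then show ?thesis using i(1) w(1) by blast
  qed
  then show ?thesis using sub unfolding local_metric_set_def by blast
qed

end
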